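(* Let $K\colon\mathbb{E}(D)\to\mathbb{E}(D)$ be an affine function and let $u\colon D\to[0,\infty)$ be a prefixed point of $K$, i.e. $K(u)\le u$. If $\mathsf{D}K$ has a $u$-ranking supermartingale, then the restriction $K_{\le u}\colon\mathbb{E}_{\le u}(D)\to\mathbb{E}_{\le u}(D)$ of $K$ has a unique fixed point.
   Context: $\mathbb{E}(D)$ is the set of functions $D\to[0,\infty]$ with pointwise order and operations ($\infty+x=\infty$, $0\cdot\infty=0$, $r\cdot\infty=\infty$ for $r>0$); $\mathbb{E}_{\le u}(D)=\{\eta\mid \eta\le u\}$; $\mathbb{O}$ is the constant zero function; for $x\ge y$ in $[0,\infty]$, $x-y$ is the least $z$ with $x=y+z$. $K$ is affine if $K(\alpha\eta_1+(1-\alpha)\eta_2)=\alpha K(\eta_1)+(1-\alpha)K(\eta_2)$ for all $\eta_1,\eta_2$ and $\alpha\in[0,1]$. $(\mathsf{D}K)(\eta)=K(\eta)-K(\mathbb{O})$. A $u$-ranking supermartingale with respect to $\mathsf{D}K$ is a function $r\colon D\to[0,\infty)$ with $(\mathsf{D}K)(r)+u\le r$. *)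

theory Defs
  imports "HOL-Analysis.Analysis"
begin

text \<open>Expectations E(D) are functions D \<Rightarrow> ennreal ([0,\<infinity>]), ordered and operated pointwise.\<close>

text \<open>Note Isabelle's ennreal minus has top - top = top, whereas the
  paper's convention gives 0, so we define it explicitly.\<close>
definition ediff :: "ennreal \<Rightarrow> ennreal \<Rightarrow> ennreal" where
  "ediff x y = Inf {z. x = y + z}"

definition affine_trans :: "(('d \<Rightarrow> ennreal) \<Rightarrow> ('d \<Rightarrow> ennreal)) \<Rightarrow> bool" where
  "affine_trans K \<longleftrightarrow> (\<forall>\<eta>1 \<eta>2 (\<alpha>::real). 0 \<le> \<alpha> \<and> \<alpha> \<le> 1 \<longrightarrow>
      K (\<lambda>d. ennreal \<alpha> * \<eta>1 d + ennreal (1 - \<alpha>) * \<eta>2 d)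
        = (\<lambda>d. ennreal \<alpha> * K \<eta>1 d + ennreal (1 - \<alpha>) * K \<eta>2 d))"

definition DK :: "(('d \<Rightarrow> ennreal) \<Rightarrow> ('d \<Rightarrow> ennreal)) \<Rightarrow> ('d \<Rightarrow> ennreal) \<Rightarrow> ('d \<Rightarrow> ennreal)" where
  "DK K \<eta> = (\<lambda>d. ediff (K \<eta> d) (K (\<lambda>_. 0) d))"

definition ranking_supermartingale ::
  "(('d \<Rightarrow> ennreal) \<Rightarrow> ('d \<Rightarrow> ennreal)) \<Rightarrow> ('d \<Rightarrow> real) \<Rightarrow> ('d \<Rightarrow> real) \<Rightarrow> bool" where
  "ranking_supermartingale L u r \<longleftrightarrow> (\<forall>d. 0 \<le> r d) \<and>
     (\<forall>d. L (\<lambda>x. ennreal (r x)) d + ennreal (u d) \<le> ennreal (r d))"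

end

theory Submission
  imports Defs
begin

lemma cancel_fin: fixes a b c :: ennreal
  shows "c \<noteq> top \<Longrightarrow> a + c \<le> b + c \<Longrightarrow> a \<le> b"
  by (metis add.commute ennreal_add_left_cancel_le infinity_ennreal_def)

lemma aff_inst:
  assumes "affine_trans K" "0 \<le> a" "a \<le> 1"
  shows "K (\<lambda>d. ennreal a * e1 d + ennreal (1 - a) * e2 d)
      = (\<lambda>d. ennreal a * K e1 d + ennreal (1 - a) * K e2 d)"
proof -
  have "\<forall>\<eta>1 \<eta>2 (\<alpha>::real). 0 \<le> \<alpha> \<and> \<alpha> \<le> 1 \<longrightarrow>
      K (\<lambda>d. ennreal \<alpha> * \<eta>1 d + ennreal (1 - \<alpha>) * \<eta>2 d)
        = (\<lambda>d. ennreal \<alpha> * K \<eta>1 d + ennreal (1 - \<alpha>) * K \<eta>2 d)"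
    (is "\<forall>x y z. ?P x y z")
    using assms(1) unfolding affine_trans_def .
  then have "?P e1 e2 a" by blast
  then show ?thesis using assms(2,3) by blast
qed

lemma lim_le: fixes c b :: ennreal
  assumes h: "\<And>l::real. 0 < l \<Longrightarrow> l < 1 \<Longrightarrow> ennreal (1 - l) * c \<le> b"
  shows "c \<le> b"
proof (cases c)
  case (real cc)
  show ?thesis
  proof (cases b)
    case (real bb)
    show ?thesis
    proof (rule ccontr)
      assume "\<not> c \<le> b"
      then have lt: "bb < cc" using real \<open>c = ennreal cc\<close> \<open>0 \<le> cc\<close>
        by (metis ennreal_le_iff linorder_not_le order.strict_implies_order)
      define l where "l = (cc - bb) / (2 * cc)"
      have cc0: "0 < cc" using lt real by linarith
      have l0: "0 < l" "l < 1" unfolding l_def using lt real cc0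
        by (simp_all add: divide_less_eq)
      have "ennreal ((1 - l) * cc) = ennreal (1 - l) * ennreal cc"
        using cc0 by (intro ennreal_mult'') simp
      then have "ennreal ((1 - l) * cc) \<le> ennreal bb"
        using h[OF l0] real \<open>c = ennreal cc\<close> by simp
      then have "(1 - l) * cc \<le> bb" using real by simp
      moreover have "(1 - l) * cc = (cc + bb) / 2" using cc0
        unfolding l_def by (simp add: field_simps)
      ultimately show False using lt by simp
    qed
  qed simp
next
  case top
  have "ennreal (1 - 1/2) * c \<le> b" using h[of "1/2"] by simp
  then show ?thesis using top by (simp add: ennreal_mult_top top_unique)
qed

lemma aff_add:
  assumes "affine_trans K"
  shows "K (\<lambda>d. x d + y d) d + K (\<lambda>_. 0) d = K x d + K y d"
proof -
  have h1: "K (\<lambda>d. ennreal (1/2) * (x d + y d) + ennreal (1 - 1/2) * 0)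
     = (\<lambda>d. ennreal (1/2) * K (\<lambda>d. x d + y d) d + ennreal (1 - 1/2) * K (\<lambda>_. 0) d)"
    by (rule aff_inst[OF assms]) simp_all
  have h2: "K (\<lambda>d. ennreal (1/2) * x d + ennreal (1 - 1/2) * y d)
     = (\<lambda>d. ennreal (1/2) * K x d + ennreal (1 - 1/2) * K y d)"
    by (rule aff_inst[OF assms]) simp_all
  have e: "(\<lambda>d. ennreal (1/2) * (x d + y d) + ennreal (1 - 1/2) * 0) = (\<lambda>d. ennreal (1/2) * x d + ennreal (1 - 1/2) * y d)"
    by (simp add: distrib_left)
  have "ennreal (1/2) * (K (\<lambda>d. x d + y d) d + K (\<lambda>_. 0) d) = ennreal (1/2) * (K x d + K y d)"
    using h1 h2 e fun_cong[OF h1, of d] fun_cong[OF h2, of d] by (simp add: distrib_left)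
  then have "ennreal 2 * (ennreal (1/2) * (K (\<lambda>d. x d + y d) d + K (\<lambda>_. 0) d)) = ennreal 2 * (ennreal (1/2) * (K x d + K y d))"
    by (rule arg_cong)
  moreover have c: "ennreal 2 * ennreal (1/2) = 1"
    by (subst ennreal_mult''[symmetric]) simp_all
  ultimately show ?thesis unfolding mult.assoc[symmetric] c mult_1 by simp
qed

lemma aff_low:
  assumes "affine_trans K"
  shows "K (\<lambda>_. 0) d \<le> K y d"
proof (rule lim_le)
  fix l :: real assume l: "0 < l" "l < 1"
  have 1: "K (\<lambda>d. ennreal l * (ennreal (1/l) * y d) + ennreal (1 - l) * 0)
     = (\<lambda>d. ennreal l * K (\<lambda>d. ennreal (1/l) * y d) d + ennreal (1 - l) * K (\<lambda>_. 0) d)"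
    using aff_inst[OF assms, of l "\<lambda>d. ennreal (1/l) * y d" "\<lambda>_. 0"] l by simp
  have 2: "(\<lambda>d. ennreal l * (ennreal (1/l) * y d) + ennreal (1 - l) * 0) = y"
    using l by (simp add: mult.assoc[symmetric] ennreal_mult''[symmetric])
  have "K y = (\<lambda>d. ennreal l * K (\<lambda>d. ennreal (1/l) * y d) d + ennreal (1 - l) * K (\<lambda>_. 0) d)"
    using 1 unfolding 2 .
  then have "K y d = ennreal l * K (\<lambda>d. ennreal (1/l) * y d) d + ennreal (1 - l) * K (\<lambda>_. 0) d"
    by simp
  then show "ennreal (1 - l) * K (\<lambda>_. 0) d \<le> K y d" by (simp add: add_increasing)
qed

lemma aff_mono:
  assumes "affine_trans K" and "x \<le> z"
  shows "K x \<le> K z"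
proof (rule le_funI)
  fix d
  define w where "w = (\<lambda>d. z d - x d)"
  have z: "(\<lambda>d. x d + w d) = z"
    using assms(2) by (auto simp: le_fun_def add_diff_inverse_ennreal w_def)
  have eq: "K z d + K (\<lambda>_. 0) d = K x d + K w d"
    using aff_add[OF assms(1), of x w d] unfolding z .
  show "K x d \<le> K z d"
  proof (cases "K (\<lambda>_. 0) d = top")
    case True
    then show ?thesis using aff_low[OF assms(1), of d z] by (simp add: top_unique)
  next
    case False
    have "K x d + K (\<lambda>_. 0) d \<le> K z d + K (\<lambda>_. 0) d"
      unfolding eq using aff_low[OF assms(1), of d w] by (rule add_left_mono)
    then show ?thesis using cancel_fin False by blast
  qed
qed


lemma ediff_eq:
  fixes x y :: ennreal
  assumes "y \<noteq> top" "y \<le> x"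
  shows "ediff x y = x - y"
proof -
  have "{z. x = y + z} = {x - y}"
  proof (intro set_eqI iffI)
    fix z assume "z \<in> {z. x = y + z}"
    then have "x = y + z" by simp
    then show "z \<in> {x - y}" using assms(1) by simp
  next
    fix z assume "z \<in> {x - y}"
    then show "z \<in> {z. x = y + z}" using assms(2) by (simp add: add_diff_inverse_ennreal)
  qed
  then show ?thesis unfolding ediff_def by simp
qed

lemma le_plus_absdiff:
  fixes x y :: ennreal
  assumes "x \<noteq> top" "y \<noteq> top"
  shows "x \<le> y + ennreal \<bar>enn2real x - enn2real y\<bar>"
proof -
  obtain X where X: "x = ennreal X" "0 \<le> X" using assms(1) by (cases x) auto
  obtain Y where Y: "y = ennreal Y" "0 \<le> Y" using assms(2) by (cases y) auto
  have "X \<le> Y + \<bar>X - Y\<bar>" by simp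
  then show ?thesis using X Y by (simp add: ennreal_plus[symmetric] del: ennreal_plus)
qed

lemma absdiff_le:
  fixes x y k m :: ennreal
  assumes "x \<noteq> top" "y \<noteq> top" "k \<noteq> top" "m \<noteq> top"
    and "x + k \<le> y + m" "y + k \<le> x + m"
  shows "ennreal \<bar>enn2real x - enn2real y\<bar> + k \<le> m"
proof -
  obtain X where X: "x = ennreal X" "0 \<le> X" using assms(1) by (cases x) auto
  obtain Y where Y: "y = ennreal Y" "0 \<le> Y" using assms(2) by (cases y) auto
  obtain Kk where Kk: "k = ennreal Kk" "0 \<le> Kk" using assms(3) by (cases k) auto
  obtain M where M: "m = ennreal M" "0 \<le> M" using assms(4) by (cases m) auto
  have "X + Kk \<le> Y + M" "Y + Kk \<le> X + M"
    using assms(5,6) X Y Kk M by (simp_all add: ennreal_plus[symmetric] del: ennreal_plus)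
  then have "\<bar>X - Y\<bar> + Kk \<le> M" by linarith
  then show ?thesis using X Y Kk M by (simp add: ennreal_plus[symmetric] del: ennreal_plus)
qed

lemma uniq:
  fixes K :: "('d \<Rightarrow> ennreal) \<Rightarrow> ('d \<Rightarrow> ennreal)"
  assumes aff: "affine_trans K"
    and Ufin: "\<And>d. U d \<noteq> top"
    and KU: "K U \<le> U"
    and Rfin: "\<And>d. R d \<noteq> top"
    and rk: "\<And>d. K R d + U d \<le> R d + K (\<lambda>_. 0) d"
    and a: "a \<le> U" "K a = a" and b: "b \<le> U" "K b = b"
  shows "a = b"
proof -
  let ?Z = "\<lambda>_::'d. 0::ennreal"
  have mono: "\<And>x z. x \<le> z \<Longrightarrow> K x \<le> K z" using aff_mono[OF aff] by blast
  have fin: "\<And>x d. x \<le> U \<Longrightarrow> K x d \<noteq> top"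
  proof -
    fix x d assume "x \<le> U"
    then have "K x d \<le> U d" using mono[of x U] KU by (auto simp: le_fun_def intro: order_trans)
    then show "K x d \<noteq> top" using Ufin[of d] by (auto simp: top_unique)
  qed
  have Zfin: "\<And>d. K ?Z d \<noteq> top" using fin[of ?Z] by (simp add: le_fun_def)
  have afin: "\<And>d. a d \<noteq> top" using a Ufin by (metis le_funD top_unique)
  have bfin: "\<And>d. b d \<noteq> top" using b Ufin by (metis le_funD top_unique)
  define \<delta> where "\<delta> = (\<lambda>d. ennreal \<bar>enn2real (a d) - enn2real (b d)\<bar>)"
  have \<delta>U: "\<delta> \<le> U"
  proof (rule le_funI)
    fix d
    obtain A where A: "a d = ennreal A" "0 \<le> A" using afin[of d] by (cases "a d") auto
    obtain B where B: "b d = ennreal B" "0 \<le> B" using bfin[of d] by (cases "b d") auto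
    have "a d \<le> U d" "b d \<le> U d" using a b by (auto simp: le_fun_def)
    moreover have "ennreal \<bar>A - B\<bar> \<le> ennreal A \<or> ennreal \<bar>A - B\<bar> \<le> ennreal B"
      using A B by (cases "A \<le> B") (simp_all add: abs_if)
    moreover have "\<delta> d = ennreal \<bar>A - B\<bar>" unfolding \<delta>_def using A B by simp
    ultimately show "\<delta> d \<le> U d" using A B by (metis order_trans)
  qed
  have \<delta>fin: "\<And>d. K \<delta> d \<noteq> top" using fin[OF \<delta>U] .
  have key: "\<And>d. \<delta> d + K ?Z d \<le> K \<delta> d"
  proof -
    fix d
    have ab: "a \<le> (\<lambda>d. b d + \<delta> d)" unfolding \<delta>_def
      using le_plus_absdiff[OF afin bfin] by (simp add: le_fun_def)
    have ba: "b \<le> (\<lambda>d. a d + \<delta> d)" unfolding \<delta>_def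
      using le_plus_absdiff[OF bfin afin] by (simp add: le_fun_def abs_minus_commute)
    have "a d + K ?Z d \<le> K (\<lambda>d. b d + \<delta> d) d + K ?Z d"
      using mono[OF ab] a(2) by (metis add_right_mono le_funD)
    also have "\<dots> = b d + K \<delta> d" using aff_add[OF aff, of b \<delta> d] b(2) by simp
    finally have 1: "a d + K ?Z d \<le> b d + K \<delta> d" .
    have "b d + K ?Z d \<le> K (\<lambda>d. a d + \<delta> d) d + K ?Z d"
      using mono[OF ba] b(2) by (metis add_right_mono le_funD)
    also have "\<dots> = a d + K \<delta> d" using aff_add[OF aff, of a \<delta> d] a(2) by simp
    finally have 2: "b d + K ?Z d \<le> a d + K \<delta> d" .
    have "\<delta> d = ennreal \<bar>enn2real (a d) - enn2real (b d)\<bar>" unfolding \<delta>_def by simp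
    then show "\<delta> d + K ?Z d \<le> K \<delta> d"
      using absdiff_le[OF afin bfin Zfin \<delta>fin 1 2] by simp
  qed
  define N where "N = (\<lambda>n::nat. \<lambda>d. of_nat n * \<delta> d)"
  have NS: "\<And>n. N (Suc n) = (\<lambda>d. N n d + \<delta> d)" unfolding N_def
    by (simp add: algebra_simps)
  have ind: "N n \<le> R \<and> (\<forall>d. N n d + K ?Z d \<le> K (N n) d)" for n
  proof (induction n)
    case 0
    have "N 0 = ?Z" unfolding N_def by simp
    then show ?case by (simp add: le_fun_def)
  next
    case (Suc n)
    then have IH1: "N n \<le> R" and IH2: "\<And>d. N n d + K ?Z d \<le> K (N n) d" by auto
    have c1: "N (Suc n) \<le> R"
    proof (rule le_funI)
      fix d
      have "N (Suc n) d + K ?Z d = (N n d + K ?Z d) + \<delta> d" unfolding NS by (simp add: algebra_simps)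
      also have "\<dots> \<le> K (N n) d + U d" using IH2[of d] \<delta>U by (intro add_mono) (auto simp: le_fun_def)
      also have "\<dots> \<le> K R d + U d" using mono[OF IH1] by (intro add_mono) (auto simp: le_fun_def)
      also have "\<dots> \<le> R d + K ?Z d" by (rule rk)
      finally show "N (Suc n) d \<le> R d" using cancel_fin Zfin by blast
    qed
    have c2: "N (Suc n) d + K ?Z d \<le> K (N (Suc n)) d" for d
    proof -
      have "(N (Suc n) d + K ?Z d) + K ?Z d = (N n d + K ?Z d) + (\<delta> d + K ?Z d)"
        unfolding NS by (simp add: algebra_simps)
      also have "\<dots> \<le> K (N n) d + K \<delta> d" using IH2[of d] key[of d] by (rule add_mono)
      also have "\<dots> = K (N (Suc n)) d + K ?Z d" unfolding NS using aff_add[OF aff, of "N n" \<delta> d] by simp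
      finally show ?thesis using cancel_fin Zfin by blast
    qed
    show ?case using c1 c2 by blast
  qed
  show "a = b"
  proof (rule ext)
    fix d
    obtain t where t: "\<delta> d = ennreal t" "t = \<bar>enn2real (a d) - enn2real (b d)\<bar>" unfolding \<delta>_def by simp
    obtain Rr where Rr: "R d = ennreal Rr" "0 \<le> Rr" using Rfin[of d] by (cases "R d") auto
    have "t = 0"
    proof (rule ccontr)
      assume "t \<noteq> 0"
      then have "0 < t" using t by simp
      then obtain n :: nat where n: "Rr < of_nat n * t" using ex_less_of_nat_mult by blast
      have "N n d \<le> R d" using ind[of n] by (auto simp: le_fun_def)
      moreover have "N n d = ennreal (of_nat n * t)" unfolding N_def t(1) using \<open>0 < t\<close>
        by (simp add: ennreal_of_nat_eq_real_of_nat ennreal_mult'')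
      ultimately have "of_nat n * t \<le> Rr" using Rr by simp
      then show False using n by simp
    qed
    then have "enn2real (a d) = enn2real (b d)" using t by simp
    then show "a d = b d" using afin[of d] bfin[of d] by (metis ennreal_enn2real top.not_eq_extremum)
  qed
qed


theorem corollary3p7:
  fixes K :: "('d \<Rightarrow> ennreal) \<Rightarrow> ('d \<Rightarrow> ennreal)" and u :: "'d \<Rightarrow> real"
  assumes "affine_trans K"
    and "\<forall>d. 0 \<le> u d"
    and "K (\<lambda>d. ennreal (u d)) \<le> (\<lambda>d. ennreal (u d))"
    and "\<exists>r. ranking_supermartingale (DK K) u r"
  shows "\<exists>!\<eta>. \<eta> \<le> (\<lambda>d. ennreal (u d)) \<and> K \<eta> = \<eta>"
proof -
  define U where "U = (\<lambda>d. ennreal (u d))"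
  let ?Z = "\<lambda>_::'d. 0::ennreal"
  have aff: "affine_trans K" by fact
  have KU: "K U \<le> U" using assms(3) unfolding U_def .
  have mono: "\<And>x z. x \<le> z \<Longrightarrow> K x \<le> K z" using aff_mono[OF aff] by blast
  obtain r where rs: "ranking_supermartingale (DK K) u r" using assms(4) by blast
  define R where "R = (\<lambda>d. ennreal (r d))"
  have Ufin: "\<And>d. U d \<noteq> top" unfolding U_def by simp
  have Rfin: "\<And>d. R d \<noteq> top" unfolding R_def by simp
  have Zfin: "\<And>d. K ?Z d \<noteq> top"
  proof -
    fix d
    have "K ?Z d \<le> U d" using mono[of ?Z U] KU by (auto simp: le_fun_def intro: order_trans)
    then show "K ?Z d \<noteq> top" using Ufin[of d] by (auto simp: top_unique)
  qed
  have rk: "\<And>d. K R d + U d \<le> R d + K ?Z d"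
  proof -
    fix d
    have h: "DK K R d + U d \<le> R d" using rs unfolding ranking_supermartingale_def R_def U_def by blast
    have le: "K ?Z d \<le> K R d" by (rule aff_low[OF aff])
    have "DK K R d = K R d - K ?Z d" unfolding DK_def by (rule ediff_eq[OF Zfin le])
    then have "K ?Z d + (K R d - K ?Z d) + U d \<le> K ?Z d + R d" using h
      by (metis add.assoc add_left_mono)
    then show "K R d + U d \<le> R d + K ?Z d" using le by (simp add: add_diff_inverse_ennreal add.commute)
  qed
  define F where "F = (\<lambda>\<eta>. K (inf \<eta> U))"
  have monoF: "mono F" unfolding F_def by (intro monoI mono inf_mono) auto
  define \<mu> where "\<mu> = lfp F"
  have "F U \<le> U" unfolding F_def using KU by simp
  then have \<mu>U: "\<mu> \<le> U" unfolding \<mu>_def by (rule lfp_lowerbound)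
  have "\<mu> = F \<mu>" unfolding \<mu>_def by (rule lfp_unfold[OF monoF])
  then have fix\<mu>: "K \<mu> = \<mu>" unfolding F_def using \<mu>U by (simp add: inf_absorb1)
  show ?thesis unfolding U_def[symmetric]
  proof (rule ex1I[of _ \<mu>])
    show "\<mu> \<le> U \<and> K \<mu> = \<mu>" using \<mu>U fix\<mu> by simp
  next
    fix \<eta> assume "\<eta> \<le> U \<and> K \<eta> = \<eta>"
    then show "\<eta> = \<mu>" using uniq[OF aff Ufin KU Rfin rk] \<mu>U fix\<mu> by blast
  qed
qed

end
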